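(* Let $K$ be a field of characteristic zero. There is no $P\in A$ of the form $P=y^{(m)}-Q_0$ with $m\ge2$ and $Q_0\in A$ not involving the variables $y^{(i)}$ for $i\ge m$ such that $L(P)=\langle p,q,xq,xp-yq,yp\rangle_K$, where $p=\partial/\partial x$, $q=\partial/\partial y$.
   Context: $A=K[[x,y]][y',y'',\dots]$ is the polynomial ring in variables $y^{(1)}=y',y^{(2)}=y'',\dots$ over $K[[x,y]]$ (write $y^{(0)}=y$). The total derivative is the derivation $D_x=\partial/\partial x+\sum_{i\ge0}y^{(i+1)}\partial/\partial y^{(i)}$ of $A$. Every formal vector field $X=f\partial_x+g\partial_y\in\operatorname{Der}K[[x,y]]$ has a unique extension (its prolongation, still denoted $X$) to a $K$-linear derivation of $A$ such that $[X,D_x]=QD_x$ for some $Q\in A$; explicitly $Q=-f_x-f_yy'$ and $X(y^{(k+1)})=D_x(X(y^{(k)}))+Qy^{(k+1)}$. For $P=y^{(m)}-Q_0$ as in the claim, $L(P)$ (the algebra of Lie point symmetries) is the set of $X\in\operatorname{Der}K[[x,y]]$ whose prolongation satisfies that $X(P)$ is divisible by $P$ in $A$. *)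

theory Defs
  imports "HOL-Library.Poly_Mapping"
begin

text \<open>
Uniform representation: a (formal) series in the countably many variables
z_0 = x, z_(k+1) = y^(k) (so z_1 = y, z_2 = y', ...) is its coefficient function
on monomials (finitely supported exponent vectors).  K[[x,y]] is the set of series
only involving z_0, z_1; the ring A = K[[x,y]][y',y'',...] is the set of series in
which only finitely many monomials in the variables y', y'', ... occur.
\<close>

type_synonym 'a ser = "(nat \<Rightarrow>\<^sub>0 nat) \<Rightarrow> 'a"

definition ser_zero :: "'a::field ser" where
  "ser_zero = (\<lambda>_. 0)"

definition ser_const :: "'a::field \<Rightarrow> 'a ser" where
  "ser_const c = (\<lambda>m. if m = 0 then c else 0)"

definition ser_var :: "nat \<Rightarrow> 'a::field ser" where
  "ser_var i = (\<lambda>m. if m = Poly_Mapping.single i 1 then 1 else 0)"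

definition ser_add :: "'a::field ser \<Rightarrow> 'a ser \<Rightarrow> 'a ser" where
  "ser_add f g = (\<lambda>m. f m + g m)"

definition ser_sub :: "'a::field ser \<Rightarrow> 'a ser \<Rightarrow> 'a ser" where
  "ser_sub f g = (\<lambda>m. f m - g m)"

definition ser_neg :: "'a::field ser \<Rightarrow> 'a ser" where
  "ser_neg f = (\<lambda>m. - f m)"

definition ser_smult :: "'a::field \<Rightarrow> 'a ser \<Rightarrow> 'a ser" where
  "ser_smult c f = (\<lambda>m. c * f m)"

text \<open>Cauchy product (each coefficient is a finite sum).\<close>
definition ser_mult :: "'a::field ser \<Rightarrow> 'a ser \<Rightarrow> 'a ser" where
  "ser_mult f g = (\<lambda>m. \<Sum>p\<in>{p. fst p + snd p = m}. f (fst p) * g (snd p))"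

definition ser_pd :: "nat \<Rightarrow> 'a::field ser \<Rightarrow> 'a ser" where
  "ser_pd i f = (\<lambda>m. of_nat (Poly_Mapping.lookup m i + 1) * f (m + Poly_Mapping.single i 1))"

definition in_Kxy :: "'a::field ser \<Rightarrow> bool" where
  "in_Kxy f \<longleftrightarrow> (\<forall>m. f m \<noteq> 0 \<longrightarrow> (\<forall>i\<ge>2. Poly_Mapping.lookup m i = 0))"

definition in_A :: "'a::field ser \<Rightarrow> bool" where
  "in_A f \<longleftrightarrow> finite ((\<lambda>m. (\<lambda>i. if 2 \<le> i then Poly_Mapping.lookup m i else 0)) ` {m. f m \<noteq> 0})"

text \<open>Total derivative D_x = d/dx + sum_k y^(k+1) d/dy^(k); on each coefficient
only finitely many summands can contribute.\<close>
definition Dx :: "'a::field ser \<Rightarrow> 'a ser" where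
  "Dx h = (\<lambda>m. ser_pd 0 h m +
      (\<Sum>k\<in>{k. Poly_Mapping.lookup m (Suc (Suc k)) \<noteq> 0}.
          ser_mult (ser_var (Suc (Suc k))) (ser_pd (Suc k) h) m))"

definition prolQ :: "'a::field ser \<Rightarrow> 'a ser" where
  "prolQ f = ser_sub (ser_neg (ser_pd 0 f)) (ser_mult (ser_pd 1 f) (ser_var 2))"

text \<open>prolPhi f g k = X(y^(k)) for X = f p + g q.\<close>
fun prolPhi :: "'a::field ser \<Rightarrow> 'a ser \<Rightarrow> nat \<Rightarrow> 'a ser" where
  "prolPhi f g 0 = g"
| "prolPhi f g (Suc k) =
     ser_add (Dx (prolPhi f g k)) (ser_mult (prolQ f) (ser_var (Suc (Suc k))))"

text \<open>Prolongation of X = f p + g q acting on h \<in> A: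
X(h) = f dh/dx + sum_k X(y^(k)) dh/dy^(k)  (finite sum for h \<in> A).\<close>
definition prol :: "'a::field ser \<Rightarrow> 'a ser \<Rightarrow> 'a ser \<Rightarrow> 'a ser" where
  "prol f g h = (\<lambda>m. ser_mult f (ser_pd 0 h) m +
      (\<Sum>k\<in>{k. ser_pd (Suc k) h \<noteq> ser_zero}.
          ser_mult (prolPhi f g k) (ser_pd (Suc k) h) m))"

text \<open>L(P): vector fields f p + g q (as pairs (f,g) in K[[x,y]]) whose prolongation
maps P to a multiple of P in A.\<close>
definition Lsym :: "'a::field ser \<Rightarrow> ('a ser \<times> 'a ser) set" where
  "Lsym P = {(f, g). in_Kxy f \<and> in_Kxy g \<and>
      (\<exists>B. in_A B \<and> prol f g P = ser_mult P B)}"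

text \<open>The K-span of p, q, xq, xp - yq, yp, as pairs (f,g) of coefficients of (p,q).\<close>
definition span5 :: "('a::field ser \<times> 'a ser) set" where
  "span5 = {(f, g). \<exists>a b c d e.
      f = ser_add (ser_add (ser_const a) (ser_smult d (ser_var 0))) (ser_smult e (ser_var 1)) \<and>
      g = ser_sub (ser_add (ser_const b) (ser_smult c (ser_var 0))) (ser_smult d (ser_var 1))}"

end

theory Submission
  imports Defs "HOL-Library.FuncSet"
begin


abbreviation z :: "nat \<Rightarrow> nat \<Rightarrow>\<^sub>0 nat" where "z i \<equiv> Poly_Mapping.single i (Suc 0)"
abbreviation lk :: "(nat \<Rightarrow>\<^sub>0 nat) \<Rightarrow> nat \<Rightarrow> nat" where "lk m i \<equiv> Poly_Mapping.lookup m i"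
abbreviation kys :: "(nat \<Rightarrow>\<^sub>0 nat) \<Rightarrow> nat set" where "kys m \<equiv> Poly_Mapping.keys m"

lemma fin_split: fixes m :: "nat \<Rightarrow>\<^sub>0 nat" shows "finite {p::(nat \<Rightarrow>\<^sub>0 nat) \<times> (nat \<Rightarrow>\<^sub>0 nat). fst p + snd p = m}"
proof -
  let ?A = "{a::nat \<Rightarrow>\<^sub>0 nat. \<forall>k. lk a k \<le> lk m k}"
  have inj: "inj_on (\<lambda>a. FuncSet.restrict (lk a) (kys m)) ?A"
  proof (rule inj_onI)
    fix a b assume a: "a \<in> ?A" and b: "b \<in> ?A" and e: "FuncSet.restrict (lk a) (kys m) = FuncSet.restrict (lk b) (kys m)"
    show "a = b"
    proof (rule poly_mapping_eqI)
      fix k show "lk a k = lk b k"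
      proof (cases "k \<in> kys m")
        case True
        have "FuncSet.restrict (lk a) (kys m) k = FuncSet.restrict (lk b) (kys m) k" using e by simp
        then show ?thesis using True by simp
      next
        case False then have "lk m k = 0" by (simp add: in_keys_iff)
        then show ?thesis using a b by (metis le_zero_eq mem_Collect_eq)
      qed
    qed
  qed
  have "(\<lambda>a. FuncSet.restrict (lk a) (kys m)) ` ?A \<subseteq> PiE (kys m) (\<lambda>k. {0..lk m k})"
    by auto
  then have "finite ((\<lambda>a. FuncSet.restrict (lk a) (kys m)) ` ?A)"
    by (rule finite_subset) (auto intro: finite_PiE)
  then have fA: "finite ?A" using finite_imageD inj by blast
  have "{p. fst p + snd p = m} \<subseteq> (\<lambda>a. (a, m - a)) ` ?A"
  proof
    fix p :: "(nat \<Rightarrow>\<^sub>0 nat) \<times> (nat \<Rightarrow>\<^sub>0 nat)" assume "p \<in> {p. fst p + snd p = m}"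
    then have e: "fst p + snd p = m" by simp
    have "fst p \<in> ?A" using e by (auto simp: lookup_add)
    moreover have "p = (fst p, m - fst p)" using e by auto
    ultimately show "p \<in> (\<lambda>a. (a, m - a)) ` ?A" by blast
  qed
  then show ?thesis using fA by (meson finite_imageI finite_subset)
qed

lemma lk_z'[simp]: "lk (Poly_Mapping.single i (Suc 0)) j = (if i = j then 1 else 0)"
  by (simp add: lookup_single when_def)
lemma lk_add[simp]: "lk (a + b) j = lk a j + lk b j" by (simp add: lookup_add)
lemma lk_minus[simp]: "lk (a - b) j = lk a j - lk b j" by (simp add: lookup_minus)
lemma pm_eq_iff: "(a = b) \<longleftrightarrow> (\<forall>j. lk a j = lk b j)"
  using poly_mapping_eqI by auto
lemma lk_zero[simp]: "lk 0 j = 0" by simp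

lemma add_z_eq_z: "(mon + z i = z j) \<longleftrightarrow> (i = j \<and> mon = 0)"
proof
  assume h: "mon + z i = z j"
  then have "lk (mon + z i) i = lk (z j) i" by simp
  then have ij: "i = j" by (simp split: if_splits)
  have "\<forall>k. lk mon k = 0"
  proof
    fix k have "lk (mon + z i) k = lk (z j) k" using h by simp
    then show "lk mon k = 0" using ij by (simp split: if_splits)
  qed
  then show "i = j \<and> mon = 0" using ij by (simp add: pm_eq_iff)
qed auto

lemma minus_z_add: "0 < lk mon i \<Longrightarrow> mon - z i + z i = mon"
  by (simp add: pm_eq_iff)
lemma z_add_minus: "0 < lk mon i \<Longrightarrow> z i + (mon - z i) = mon"
  by (simp add: pm_eq_iff)

lemma ser_mult_comm: "ser_mult f g = ser_mult g f"
  unfolding ser_mult_def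
proof (rule ext)
  fix m :: "nat \<Rightarrow>\<^sub>0 nat"
  show "(\<Sum>p\<in>{p. fst p + snd p = m}. f (fst p) * g (snd p)) = (\<Sum>p\<in>{p. fst p + snd p = m}. g (fst p) * f (snd p))"
    by (rule sum.reindex_bij_witness[where i = "\<lambda>(a,b). (b,a)" and j = "\<lambda>(a,b). (b,a)"])
       (auto simp: add.commute mult.commute)
qed

lemma sum_single_split:
  fixes h :: "(nat \<Rightarrow>\<^sub>0 nat) \<times> (nat \<Rightarrow>\<^sub>0 nat) \<Rightarrow> 'a::field"
  assumes "\<And>p. fst p + snd p = mon \<Longrightarrow> p \<noteq> p0 \<Longrightarrow> h p = 0"
  shows "(\<Sum>p\<in>{p. fst p + snd p = mon}. h p) = (if fst p0 + snd p0 = mon then h p0 else 0)"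
proof -
  have "(\<Sum>p\<in>{p. fst p + snd p = mon}. h p) = (\<Sum>p\<in>{p. fst p + snd p = mon}. if p = p0 then h p0 else 0)"
    by (rule sum.cong) (use assms in auto)
  also have "\<dots> = (if fst p0 + snd p0 = mon then h p0 else 0)"
    using sum.delta[OF fin_split, where a = p0 and b = "\<lambda>_. h p0"] by simp
  finally show ?thesis .
qed

lemma mult_var_l: "ser_mult (ser_var i) h mon = (if 0 < lk mon i then h (mon - z i) else (0::'a::field))"
proof -
  have "ser_mult (ser_var i) h mon = (\<Sum>p\<in>{p. fst p + snd p = mon}. (if fst p = z i then 1 else 0) * h (snd p))"
    by (simp add: ser_mult_def ser_var_def One_nat_def)
  also have "\<dots> = (if fst (z i, mon - z i) + snd (z i, mon - z i) = mon then (if fst (z i, mon - z i) = z i then 1 else 0) * h (snd (z i, mon - z i)) else 0)"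
    by (rule sum_single_split) (auto simp: add_diff_cancel_left')
  also have "\<dots> = (if 0 < lk mon i then h (mon - z i) else 0)"
  proof (cases "0 < lk mon i")
    case True then show ?thesis by (simp add: z_add_minus)
  next
    case False
    have "z i + (mon - z i) \<noteq> mon"
    proof
      assume "z i + (mon - z i) = mon"
      then have "lk (z i + (mon - z i)) i = lk mon i" by simp
      then show False using False by simp
    qed
    then show ?thesis using False by simp
  qed
  finally show ?thesis .
qed

lemma mult_var_r: "ser_mult h (ser_var i) mon = (if 0 < lk mon i then h (mon - z i) else (0::'a::field))"
  by (subst ser_mult_comm) (rule mult_var_l)

lemma mult_const_l: "ser_mult (ser_const c) h mon = c * (h mon :: 'a::field)"
proof -
  have "ser_mult (ser_const c) h mon = (\<Sum>p\<in>{p. fst p + snd p = mon}. (if fst p = 0 then c else 0) * h (snd p))"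
    by (simp add: ser_mult_def ser_const_def)
  also have "\<dots> = (if fst (0, mon) + snd (0::nat \<Rightarrow>\<^sub>0 nat, mon) = mon then (if fst (0::nat \<Rightarrow>\<^sub>0 nat, mon) = 0 then c else 0) * h (snd (0::nat \<Rightarrow>\<^sub>0 nat, mon)) else 0)"
    by (rule sum_single_split) auto
  finally show ?thesis by simp
qed

lemma mult_const_r: "ser_mult h (ser_const c) mon = c * (h mon :: 'a::field)"
  by (subst ser_mult_comm) (rule mult_const_l)

lemma mult_zero_r: "ser_mult f (\<lambda>_. 0) mon = (0::'a::field)"
  by (simp add: ser_mult_def)
lemma mult_zero_r': "ser_mult f ser_zero mon = (0::'a::field)"
  by (simp add: ser_mult_def ser_zero_def)
lemma mult_zero_l: "ser_mult (\<lambda>_. 0) f mon = (0::'a::field)"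
  by (simp add: ser_mult_def)

lemma mult_sub_l: "ser_mult (ser_sub f g) h mon = ser_mult f h mon - ser_mult g h (mon::nat \<Rightarrow>\<^sub>0 nat)"
  by (simp add: ser_mult_def ser_sub_def left_diff_distrib sum_subtractf)
lemma mult_add_r: "ser_mult h (ser_add f g) mon = ser_mult h f mon + ser_mult h g (mon::nat \<Rightarrow>\<^sub>0 nat)"
  by (simp add: ser_mult_def ser_add_def distrib_left sum.distrib)
lemma mult_smult_l: "ser_mult (ser_smult c f) h mon = c * ser_mult f h (mon::nat \<Rightarrow>\<^sub>0 nat)"
  by (simp add: ser_mult_def ser_smult_def sum_distrib_left mult.assoc)

lemma pd_val: "ser_pd i f mon = of_nat (lk mon i + 1) * f (mon + z i)"
  by (simp add: ser_pd_def)

lemma pd_var: "ser_pd i (ser_var j) mon = (if i = j \<and> mon = 0 then (1::'a::field) else 0)"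
  by (auto simp: ser_pd_def ser_var_def add_z_eq_z One_nat_def)

lemma EU: "ser_mult (ser_var i) (ser_pd i h) mon = of_nat (lk mon i) * (h mon :: 'a::field)"
  by (auto simp: mult_var_l pd_val minus_z_add)

lemma Dx_val: "Dx h mon = of_nat (lk mon 0 + 1) * h (mon + z 0) +
   (\<Sum>k\<in>{k. lk mon (Suc (Suc k)) \<noteq> 0}. of_nat (lk (mon - z (Suc (Suc k))) (Suc k) + 1) * (h (mon - z (Suc (Suc k)) + z (Suc k)) :: 'a::field))"
  unfolding Dx_def
  by (rule arg_cong2[where f = "(+)"]) (auto simp: pd_val mult_var_l intro!: sum.cong)


definition Qfree :: "nat \<Rightarrow> 'a::field ser \<Rightarrow> bool" where
  "Qfree m Q0 \<longleftrightarrow> (\<forall>mon. Q0 mon \<noteq> 0 \<longrightarrow> (\<forall>i\<ge>m. lk mon (Suc i) = 0))"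

lemma var_val: "ser_var i mon = (if mon = z i then (1::'a::field) else 0)"
  by (simp add: ser_var_def One_nat_def)

lemma P_val: "ser_sub (ser_var (Suc m)) Q0 mon = (if mon = z (Suc m) then (1::'a::field) else 0) - Q0 mon"
  by (simp add: ser_sub_def var_val)

lemma Qfree_D: "Qfree m Q0 \<Longrightarrow> m \<le> i \<Longrightarrow> 0 < lk mon (Suc i) \<Longrightarrow> Q0 mon = 0"
  unfolding Qfree_def by force

lemma pdQ0_zero: "Qfree m (Q0::'a::field ser) \<Longrightarrow> m \<le> k \<Longrightarrow> ser_pd (Suc k) Q0 mon = 0"
  by (simp add: pd_val Qfree_D)

lemma pdP_big: assumes "Qfree m (Q0::'a::field ser)" "m < k"
  shows "ser_pd (Suc k) (ser_sub (ser_var (Suc m)) Q0) = ser_zero"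
proof (rule ext)
  fix mon
  have "mon + z (Suc k) \<noteq> z (Suc m)" using assms(2) by (simp add: add_z_eq_z)
  then show "ser_pd (Suc k) (ser_sub (ser_var (Suc m)) Q0) mon = ser_zero mon"
    using Qfree_D[OF assms(1), of k "mon + z (Suc k)"] assms(2)
    by (simp add: pd_val P_val ser_zero_def)
qed

lemma pdP_m: assumes "Qfree m (Q0::'a::field ser)"
  shows "ser_pd (Suc m) (ser_sub (ser_var (Suc m)) Q0) mon = (if mon = 0 then 1 else 0)"
  using Qfree_D[OF assms(1), of m "mon + z (Suc m)"]
  by (simp add: pd_val P_val add_z_eq_z)

lemma pdP_small: assumes "k < m"
  shows "ser_pd (Suc k) (ser_sub (ser_var (Suc m)) Q0) mon = - ser_pd (Suc k) (Q0::'a::field ser) mon"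
  using assms by (simp add: pd_val P_val add_z_eq_z)

lemma prol_P: assumes "Qfree m (Q0::'a::field ser)"
  shows "prol f g (ser_sub (ser_var (Suc m)) Q0) mon =
    ser_mult f (ser_pd 0 (ser_sub (ser_var (Suc m)) Q0)) mon +
    (\<Sum>k\<le>m. ser_mult (prolPhi f g k) (ser_pd (Suc k) (ser_sub (ser_var (Suc m)) Q0)) mon)"
proof -
  let ?P = "ser_sub (ser_var (Suc m)) Q0"
  let ?S = "{k. ser_pd (Suc k) ?P \<noteq> ser_zero}"
  have sub: "?S \<subseteq> {..m}" using pdP_big[OF assms] by (auto simp: not_le[symmetric])
  have "(\<Sum>k\<in>?S. ser_mult (prolPhi f g k) (ser_pd (Suc k) ?P) mon) =
        (\<Sum>k\<le>m. ser_mult (prolPhi f g k) (ser_pd (Suc k) ?P) mon)"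
    by (rule sum.mono_neutral_left) (use sub in \<open>auto simp: mult_zero_r'\<close>)
  then show ?thesis by (simp add: prol_def)
qed

lemma divlem:
  assumes Q: "Qfree m (Q0::'a::field ser)" and m1: "1 \<le> m" and B: "in_A B"
    and H0: "\<And>mon. 0 < lk mon (Suc m) \<Longrightarrow> H mon = 0"
    and HP: "\<And>mon. H mon = ser_mult (ser_sub (ser_var (Suc m)) Q0) B mon"
  shows "H mon = 0"
proof -
  have Bz: "\<forall>b. B b = 0"
  proof (rule ccontr)
    assume "\<not> (\<forall>b. B b = 0)"
    then have ne: "{b. B b \<noteq> 0} \<noteq> {}" by auto
    let ?R = "\<lambda>m. (\<lambda>i. if 2 \<le> i then lk m i else 0)"
    let ?E = "(\<lambda>b. lk b (Suc m)) ` {b. B b \<noteq> 0}"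
    have "?E = (\<lambda>r. r (Suc m)) ` (?R ` {b. B b \<noteq> 0})"
      using m1 by (auto simp: image_image)
    moreover have "finite (?R ` {b. B b \<noteq> 0})" using B by (simp add: in_A_def)
    ultimately have fE: "finite ?E" by simp
    define e where "e = Max ?E"
    have "e \<in> ?E" unfolding e_def using fE ne by (intro Max_in) auto
    then obtain b0 where b0: "B b0 \<noteq> 0" "lk b0 (Suc m) = e" by auto
    have emax: "\<And>b. B b \<noteq> 0 \<Longrightarrow> lk b (Suc m) \<le> e"
      unfolding e_def using fE by (intro Max_ge) auto
    let ?mon = "b0 + z (Suc m)"
    have "ser_mult (ser_sub (ser_var (Suc m)) Q0) B ?mon =
          ser_mult (ser_var (Suc m)) B ?mon - ser_mult Q0 B ?mon" by (rule mult_sub_l)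
    also have "ser_mult (ser_var (Suc m)) B ?mon = B b0" by (simp add: mult_var_l)
    also have "ser_mult Q0 B ?mon = 0"
      unfolding ser_mult_def
    proof (rule sum.neutral, rule ballI)
      fix p assume p: "p \<in> {p. fst p + snd p = ?mon}"
      show "Q0 (fst p) * B (snd p) = 0"
      proof (cases "Q0 (fst p) = 0")
        case False
        then have "lk (fst p) (Suc m) = 0" using Q by (auto simp: Qfree_def)
        moreover have "lk (fst p) (Suc m) + lk (snd p) (Suc m) = e + 1"
        proof -
          have "fst p + snd p = ?mon" using p by simp
          then have "lk (fst p + snd p) (Suc m) = lk ?mon (Suc m)" by simp
          then show ?thesis using b0(2) by simp
        qed
        ultimately have "lk (snd p) (Suc m) > e" by simp
        then have "B (snd p) = 0" using emax by force
        then show ?thesis by simp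
      qed simp
    qed
    finally have "H ?mon = B b0" using HP by simp
    moreover have "H ?mon = 0" by (rule H0) simp
    ultimately show False using b0 by simp
  qed
  show ?thesis using HP[of mon] Bz by (simp add: ser_mult_def)
qed


lemma pd_const: "ser_pd i (ser_const c) = (\<lambda>_. (0::'a::field))"
proof (rule ext)
  fix mon :: "nat \<Rightarrow>\<^sub>0 nat"
  have "mon + z i \<noteq> 0"
  proof
    assume "mon + z i = 0" then have "lk (mon + z i) i = lk 0 i" by simp
    then show False by simp
  qed
  then show "ser_pd i (ser_const c) mon = 0" by (simp add: pd_val ser_const_def)
qed

lemma pd_zero: "ser_pd i (\<lambda>_. (0::'a::field)) = (\<lambda>_. 0)"
  by (simp add: ser_pd_def)

lemma Dx_zero: "Dx (\<lambda>_. (0::'a::field)) = (\<lambda>_. 0)"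
  by (simp add: Dx_def pd_zero mult_zero_r)

lemma Dx_const: "Dx (ser_const c) = (\<lambda>_. (0::'a::field))"
  by (simp add: Dx_def pd_const mult_zero_r)

lemma pd_var_fun: "ser_pd i (ser_var j) = (if i = j then ser_const 1 else (\<lambda>_. (0::'a::field)))"
  by (auto simp: pd_var ser_const_def)

lemma sum_if_eq: "finite S \<Longrightarrow> (\<Sum>k\<in>S. if k = i then c else 0) = (if i \<in> S then c else (0::'b::comm_monoid_add))"
  by simp

lemma Dx_var: "Dx (ser_var (Suc i)) mon = (ser_var (Suc (Suc i)) mon :: 'a::field)"
proof -
  have "Dx (ser_var (Suc i)) mon = (\<Sum>k\<in>{k. lk mon (Suc (Suc k)) \<noteq> 0}.
           ser_mult (ser_var (Suc (Suc k))) (ser_pd (Suc k) (ser_var (Suc i))) mon)"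
    by (simp add: Dx_def pd_var_fun)
  also have "\<dots> = (\<Sum>k\<in>{k. lk mon (Suc (Suc k)) \<noteq> 0}. if k = i then (ser_var (Suc (Suc i)) mon :: 'a) else 0)"
    by (rule sum.cong) (auto simp: pd_var_fun mult_const_r mult_zero_r)
  also have "\<dots> = ser_var (Suc (Suc i)) mon"
  proof -
    have fin: "finite {k. lk mon (Suc (Suc k)) \<noteq> 0}"
      by (rule finite_subset[of _ "(\<lambda>k. k - 2) ` kys mon"])
         (auto simp: in_keys_iff image_iff intro!: bexI[where x="Suc (Suc _)"])
    have e: "(if 0 < lk mon (Suc (Suc i)) then ser_var (Suc (Suc i)) mon else 0) = (ser_var (Suc (Suc i)) mon :: 'a)"
      by (simp add: var_val)
    have "(\<Sum>k\<in>{k. lk mon (Suc (Suc k)) \<noteq> 0}. if k = i then (ser_var (Suc (Suc i)) mon :: 'a) else 0)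
       = (if i \<in> {k. lk mon (Suc (Suc k)) \<noteq> 0} then ser_var (Suc (Suc i)) mon else 0)"
      using fin by (rule sum_if_eq)
    then show ?thesis using e by simp
  qed
  finally show ?thesis .
qed

lemma Dx_smult: "Dx (ser_smult c h) mon = c * (Dx h mon :: 'a::field)"
  by (simp add: Dx_def ser_pd_def ser_smult_def ser_mult_def sum_distrib_left distrib_left mult.left_commute)

lemma prolQ_const: "prolQ (ser_const c) = (\<lambda>_. (0::'a::field))"
  by (simp add: prolQ_def pd_const ser_sub_def ser_neg_def mult_zero_l)

lemma prolQ_zero: "prolQ (\<lambda>_. (0::'a::field)) = (\<lambda>_. 0)"
  by (simp add: prolQ_def pd_zero ser_sub_def ser_neg_def mult_zero_l)

lemma prolQ_x: "prolQ (ser_var 0) = ser_const (-1::'a::field)"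
  by (rule ext) (simp add: prolQ_def pd_var_fun ser_sub_def ser_neg_def mult_zero_l ser_const_def)

lemma prolQ_y: "prolQ (ser_var (Suc 0)) mon = - (ser_var 2 mon :: 'a::field)"
  by (simp add: prolQ_def pd_var_fun ser_sub_def ser_neg_def mult_zero_l mult_const_l)


lemma Phi_p: "prolPhi (ser_const c) (\<lambda>_. (0::'a::field)) k = (\<lambda>_. 0)"
  by (induction k) (simp_all add: Dx_zero prolQ_const ser_add_def mult_zero_l)

lemma Phi_q: "prolPhi (\<lambda>_. (0::'a::field)) (ser_const c) k = (if k = 0 then ser_const c else (\<lambda>_. 0))"
  by (induction k) (auto simp: Dx_zero Dx_const prolQ_zero ser_add_def mult_zero_l)

lemma Phi_E: "prolPhi (ser_var 0) (ser_smult (-1) (ser_var (Suc 0))) k = ser_smult (- of_nat (Suc k)) (ser_var (Suc k) :: 'a::field ser)"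
proof (induction k)
  case 0 then show ?case by simp
next
  case (Suc k)
  show ?case
  proof (rule ext)
    fix mon
    show "prolPhi (ser_var 0) (ser_smult (-1) (ser_var (Suc 0))) (Suc k) mon = ser_smult (- of_nat (Suc (Suc k))) (ser_var (Suc (Suc k)) :: 'a ser) mon"
      using Suc by (simp only: prolPhi.simps ser_add_def Dx_smult Dx_var prolQ_x mult_const_l)
         (simp add: ser_smult_def algebra_simps)
  qed
qed

lemma Phi_X: "prolPhi (ser_var 0) (\<lambda>_. 0) k = ser_smult (- of_nat k) (ser_var (Suc k) :: 'a::field ser)"
proof (induction k)
  case 0 then show ?case by (simp add: ser_smult_def)
next
  case (Suc k)
  show ?case
  proof (rule ext)
    fix mon
    show "prolPhi (ser_var 0) (\<lambda>_. 0) (Suc k) mon = ser_smult (- of_nat (Suc k)) (ser_var (Suc (Suc k)) :: 'a ser) mon"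
      using Suc by (simp only: prolPhi.simps ser_add_def Dx_smult Dx_var prolQ_x mult_const_l)
         (simp add: ser_smult_def algebra_simps)
  qed
qed

definition Wm :: "nat \<Rightarrow> (nat \<Rightarrow>\<^sub>0 nat) \<Rightarrow> nat" where
  "Wm m mon = (\<Sum>k\<le>m. Suc k * lk mon (Suc k))"

lemma Wm_add: "Wm m (a + b) = Wm m a + Wm m b"
  by (simp add: Wm_def sum.distrib algebra_simps)

lemma Wm_z: assumes "1 \<le> j" "j \<le> Suc m" shows "Wm m (z j) = j"
proof -
  have "Wm m (z j) = (\<Sum>k\<in>{..m}. if k = j - 1 then j else 0)"
    unfolding Wm_def by (rule sum.cong) (use assms in auto)
  also have "\<dots> = j" using assms by (subst sum_if_eq) auto
  finally show ?thesis .
qed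

lemma in_A_add_const: "in_A B \<Longrightarrow> in_A (ser_add B (ser_const c))"
proof -
  assume B: "in_A B"
  let ?R = "\<lambda>m. (\<lambda>i. if 2 \<le> i then lk m i else 0)"
  have "?R ` {m. ser_add B (ser_const c) m \<noteq> 0} \<subseteq> insert (?R 0) (?R ` {m. B m \<noteq> 0})"
    by (auto simp: ser_add_def ser_const_def split: if_splits)
  moreover have "finite (insert (?R 0) (?R ` {m. B m \<noteq> 0}))" using B by (simp add: in_A_def)
  ultimately show ?thesis unfolding in_A_def by (rule finite_subset)
qed

lemma P_nz_Q: assumes "Qfree m Q0" "Q0 c \<noteq> 0"
  shows "ser_sub (ser_var (Suc m)) Q0 c = - (Q0 c :: 'a::field)" "c \<noteq> z (Suc m)"
proof -
  have "lk c (Suc m) = 0" using assms by (auto simp: Qfree_def)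
  then show "c \<noteq> z (Suc m)" by auto
  then show "ser_sub (ser_var (Suc m)) Q0 c = - Q0 c" by (simp add: P_val)
qed

lemma euler:
  fixes Q0 :: "'a::field_char_0 ser"
  assumes Q: "Qfree m Q0" and m1: "1 \<le> m"
    and L: "\<exists>B. in_A B \<and> prol (ser_var 0) (ser_smult (-1) (ser_var (Suc 0))) (ser_sub (ser_var (Suc m)) Q0) = ser_mult (ser_sub (ser_var (Suc m)) Q0) B"
    and c: "Q0 c \<noteq> 0"
  shows "lk c 0 + Suc m = Wm m c"
proof -
  let ?P = "ser_sub (ser_var (Suc m)) Q0"
  obtain B where B: "in_A B" and eq: "prol (ser_var 0) (ser_smult (-1) (ser_var (Suc 0))) ?P = ser_mult ?P B"
    using L by blast
  have prolv: "prol (ser_var 0) (ser_smult (-1) (ser_var (Suc 0))) ?P mon = (of_nat (lk mon 0) - of_nat (Wm m mon)) * ?P mon" for mon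
  proof -
    have "prol (ser_var 0) (ser_smult (-1) (ser_var (Suc 0))) ?P mon = of_nat (lk mon 0) * ?P mon +
        (\<Sum>k\<le>m. (- of_nat (Suc k)) * (of_nat (lk mon (Suc k)) * ?P mon))"
      by (simp add: prol_P[OF Q] Phi_E mult_smult_l EU)
    also have "(\<Sum>k\<le>m. (- of_nat (Suc k)) * (of_nat (lk mon (Suc k)) * ?P mon)) = (\<Sum>k\<le>m. - (of_nat (Suc k * lk mon (Suc k)) * ?P mon))"
      by (intro sum.cong refl) (simp only: of_nat_mult mult.assoc minus_mult_left)
    also have "\<dots> = - ((\<Sum>k\<le>m. of_nat (Suc k * lk mon (Suc k))) * ?P mon)"
      by (simp only: sum_negf sum_distrib_right)
    also have "\<dots> = - of_nat (Wm m mon) * ?P mon"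
      by (simp only: Wm_def of_nat_sum minus_mult_left)
    finally show ?thesis by (simp add: algebra_simps)
  qed
  let ?H = "\<lambda>mon. (of_nat (lk mon 0) - of_nat (Wm m mon) + of_nat (Suc m)) * ?P mon"
  have H0: "?H mon = 0" for mon
  proof (rule divlem[OF Q m1 in_A_add_const[OF B, of "of_nat (Suc m)"]])
    fix mon :: "nat \<Rightarrow>\<^sub>0 nat" assume pos: "0 < lk mon (Suc m)"
    show "?H mon = 0"
    proof (cases "mon = z (Suc m)")
      case True
      then show ?thesis using Wm_z[of "Suc m" m] by simp
    next
      case False
      then have "?P mon = 0" using Qfree_D[OF Q, of m mon] pos by (simp add: P_val)
      then show ?thesis by simp
    qed
  next
    fix mon
    show "?H mon = ser_mult ?P (ser_add B (ser_const (of_nat (Suc m)))) mon"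
    proof -
      have "ser_mult ?P B mon = (of_nat (lk mon 0) - of_nat (Wm m mon)) * ?P mon"
        using prolv[of mon] eq by simp
      then show ?thesis by (simp add: mult_add_r mult_const_r algebra_simps)
    qed
  qed
  have "?H c = 0" by (rule H0)
  moreover have "?P c \<noteq> 0" using P_nz_Q[OF Q c] c by simp
  ultimately have "of_nat (lk c 0) - of_nat (Wm m c) + of_nat (Suc m) = (0::'a)" by simp
  then have "(of_nat (lk c 0 + Suc m) :: 'a) = of_nat (Wm m c)" by (simp add: algebra_simps)
  then show ?thesis using of_nat_eq_iff by blast
qed

lemma pdinv:
  fixes Q0 :: "'a::field_char_0 ser"
  assumes Q: "Qfree m Q0" and m1: "1 \<le> m" and i: "i \<noteq> Suc m" and B: "in_A B"
    and eq: "\<And>mon. ser_pd i (ser_sub (ser_var (Suc m)) Q0) mon = ser_mult (ser_sub (ser_var (Suc m)) Q0) B mon"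
    and c: "Q0 c \<noteq> 0"
  shows "lk c i = 0"
proof (rule ccontr)
  let ?P = "ser_sub (ser_var (Suc m)) Q0"
  assume "lk c i \<noteq> 0"
  then have pos: "0 < lk c i" by simp
  have H: "ser_pd i ?P mon = 0" for mon
  proof (rule divlem[OF Q m1 B])
    fix mon :: "nat \<Rightarrow>\<^sub>0 nat" assume pos: "0 < lk mon (Suc m)"
    have "mon + z i \<noteq> z (Suc m)" using i by (simp add: add_z_eq_z)
    moreover have "Q0 (mon + z i) = 0" using Qfree_D[OF Q, of m "mon + z i"] pos by simp
    ultimately show "ser_pd i ?P mon = 0" by (simp add: pd_val P_val)
  qed (rule eq)
  have "ser_pd i ?P (c - z i) = of_nat (lk c i) * ?P c"
    using pos by (simp add: pd_val minus_z_add)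
  then have "?P c = 0" using H pos by simp
  then show False using P_nz_Q[OF Q c] c by simp
qed


definition avoid :: "nat \<Rightarrow> 'a::field ser \<Rightarrow> bool" where
  "avoid j h \<longleftrightarrow> (\<forall>mon. h mon \<noteq> 0 \<longrightarrow> lk mon j = 0)"

lemma avoid_Dx:
  assumes a: "avoid j (h::'a::field ser)" and b: "2 \<le> j \<Longrightarrow> avoid (j - 1) h"
  shows "avoid j (Dx h)"
  unfolding avoid_def
proof (intro allI impI, rule ccontr)
  fix mon assume nz: "Dx h mon \<noteq> 0" and lj: "lk mon j \<noteq> 0"
  have t1: "h (mon + z 0) = 0"
    using a lj unfolding avoid_def by fastforce
  have t2: "h (mon - z (Suc (Suc k)) + z (Suc k)) = 0" if k: "lk mon (Suc (Suc k)) \<noteq> 0" for k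
  proof (rule ccontr)
    assume hnz: "h (mon - z (Suc (Suc k)) + z (Suc k)) \<noteq> 0"
    then have e: "lk (mon - z (Suc (Suc k)) + z (Suc k)) j = 0" using a unfolding avoid_def by blast
    show False
    proof (cases "j = Suc (Suc k)")
      case True
      then have "avoid (Suc k) h" using b by simp
      then have "lk (mon - z (Suc (Suc k)) + z (Suc k)) (Suc k) = 0" using hnz unfolding avoid_def by blast
      then show False by simp
    next
      case False
      then show False using e lj by (simp split: if_splits)
    qed
  qed
  have "Dx h mon = 0" by (simp add: Dx_val t1 t2)
  then show False using nz by simp
qed

lemma Qy_mult: "ser_mult (prolQ (ser_var (Suc 0))) (ser_var k) mon =
   (if 0 < lk mon k \<and> mon - z k = z 2 then -1 else (0::'a::field))"
  by (simp add: mult_var_r prolQ_y var_val)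

abbreviation Phy :: "nat \<Rightarrow> 'a::field ser" where
  "Phy k \<equiv> prolPhi (ser_var (Suc 0)) (\<lambda>_. 0) k"

lemma Phy_step: "Phy (Suc k) mon = Dx (Phy k) mon + ser_mult (prolQ (ser_var (Suc 0))) (ser_var (Suc (Suc k))) mon"
  by (simp add: ser_add_def)



lemma Phy_avoid: "(j = 0 \<or> j = 1 \<or> Suc k < j) \<Longrightarrow> avoid j (Phy k :: 'a::field ser)"
proof (induction k arbitrary: j)
  case 0 then show ?case by (simp add: avoid_def)
next
  case (Suc k)
  have d: "avoid j (Dx (Phy k :: 'a ser))"
  proof (rule avoid_Dx)
    show "avoid j (Phy k :: 'a ser)" using Suc by auto
    assume "2 \<le> j" then show "avoid (j - 1) (Phy k :: 'a ser)" using Suc.prems by (intro Suc.IH) auto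
  qed
  show ?case unfolding avoid_def
  proof (intro allI impI)
    fix mon assume nz: "(Phy (Suc k) :: 'a ser) mon \<noteq> 0"
    show "lk mon j = 0"
    proof (cases "(Dx (Phy k) mon :: 'a) = 0")
      case True
      then have "ser_mult (prolQ (ser_var (Suc 0))) (ser_var (Suc (Suc k))) mon \<noteq> (0::'a)"
        using nz True Phy_step[of k mon] by (metis add.left_neutral)
      then have "0 < lk mon (Suc (Suc k))" "mon - z (Suc (Suc k)) = z 2" by (auto simp: Qy_mult split: if_splits)
      then have "mon = z 2 + z (Suc (Suc k))" by (metis minus_z_add)
      then show ?thesis using Suc.prems by auto
    next
      case False then show ?thesis using d unfolding avoid_def by blast
    qed
  qed
qed
lemma Phy_avoid_val: "(j = 0 \<or> j = 1 \<or> Suc k < j) \<Longrightarrow> lk mon j \<noteq> 0 \<Longrightarrow> (Phy k mon :: 'a::field) = 0"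
proof -
  assume h: "j = 0 \<or> j = 1 \<or> Suc k < j" "lk mon j \<noteq> 0"
  have "avoid j (Phy k :: 'a ser)" using h(1) by (rule Phy_avoid)
  then have "(Phy k mon :: 'a) \<noteq> 0 \<longrightarrow> lk mon j = 0" unfolding avoid_def by (rule spec)
  then show ?thesis using h(2) by blast
qed

declare prolPhi.simps(2)[simp del]

lemma Dx_Phy_val: "Dx (Phy k) mon = (\<Sum>j\<in>{j. j \<noteq> 0 \<and> lk mon (Suc (Suc j)) \<noteq> 0}.
   of_nat (lk (mon - z (Suc (Suc j))) (Suc j) + 1) * (Phy k (mon - z (Suc (Suc j)) + z (Suc j)) :: 'a::field))"
proof -
  have "(Phy k (mon + z 0) :: 'a) = 0" by (rule Phy_avoid_val[of 0]) auto
  then have "Dx (Phy k) mon = (\<Sum>j\<in>{j. lk mon (Suc (Suc j)) \<noteq> 0}.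
   of_nat (lk (mon - z (Suc (Suc j))) (Suc j) + 1) * (Phy k (mon - z (Suc (Suc j)) + z (Suc j)) :: 'a::field))"
    by (simp add: Dx_val)
  also have "\<dots> = (\<Sum>j\<in>{j. j \<noteq> 0 \<and> lk mon (Suc (Suc j)) \<noteq> 0}.
   of_nat (lk (mon - z (Suc (Suc j))) (Suc j) + 1) * (Phy k (mon - z (Suc (Suc j)) + z (Suc j)) :: 'a::field))"
  proof (rule sum.mono_neutral_right)
    show "finite {j. lk mon (Suc (Suc j)) \<noteq> 0}"
      by (rule finite_subset[of _ "(\<lambda>k. k - 2) ` kys mon"])
         (auto simp: in_keys_iff image_iff intro!: bexI[where x="Suc (Suc _)"])
    show "\<forall>i\<in>{j. lk mon (Suc (Suc j)) \<noteq> 0} - {j. j \<noteq> 0 \<and> lk mon (Suc (Suc j)) \<noteq> 0}.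
       of_nat (lk (mon - z (Suc (Suc i))) (Suc i) + 1) * (Phy k (mon - z (Suc (Suc i)) + z (Suc i)) :: 'a) = 0"
    proof
      fix i assume "i \<in> {j. lk mon (Suc (Suc j)) \<noteq> 0} - {j. j \<noteq> 0 \<and> lk mon (Suc (Suc j)) \<noteq> 0}"
      then have "i = 0" by auto
      moreover have "(Phy k (mon - z (Suc (Suc 0)) + z (Suc 0)) :: 'a) = 0" by (rule Phy_avoid_val[of 1]) auto
      ultimately show "of_nat (lk (mon - z (Suc (Suc i))) (Suc i) + 1) * (Phy k (mon - z (Suc (Suc i)) + z (Suc i)) :: 'a) = 0" by simp
    qed
  qed auto
  finally show ?thesis .
qed

lemma d_step: assumes k: "1 \<le> k"
  shows "(Phy (Suc k) (z 2 + z (Suc (Suc k))) :: 'a::field) = (if k = 1 then 2 else 1) * Phy k (z 2 + z (Suc k)) + (- 1)"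
proof -
  let ?mon = "z 2 + z (Suc (Suc k))"
  have T: "{j. j \<noteq> 0 \<and> lk ?mon (Suc (Suc j)) \<noteq> 0} = {k}" using k by auto
  have m1: "?mon - z (Suc (Suc k)) = z 2" by (simp add: pm_eq_iff)
  have m2: "?mon - z (Suc (Suc k)) + z (Suc k) = z 2 + z (Suc k)" by (simp add: pm_eq_iff)
  have cf: "(of_nat (lk (z 2) (Suc k) + 1) :: 'a) = (if k = 1 then 2 else 1)" by auto
  have A: "(Dx (Phy k) ?mon :: 'a) = (if k = 1 then 2 else 1) * Phy k (z 2 + z (Suc k))"
    by (simp only: Dx_Phy_val T m1 m2) (simp add: cf)
  have B: "ser_mult (prolQ (ser_var (Suc 0))) (ser_var (Suc (Suc k))) ?mon = (-1::'a)"
    by (simp add: Qy_mult m1)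
  have "(Phy (Suc k) ?mon :: 'a) = Dx (Phy k) ?mon + ser_mult (prolQ (ser_var (Suc 0))) (ser_var (Suc (Suc k))) ?mon"
    by (rule Phy_step)
  then show ?thesis by (simp only: A B)
qed

lemma d1: "(Phy (Suc 0) (z 2 + z (Suc (Suc 0))) :: 'a::field) = - 1"
proof -
  let ?mon = "z 2 + z (Suc (Suc 0))"
  have m1: "?mon - z (Suc (Suc 0)) = z 2" by (simp add: pm_eq_iff)
  have "ser_mult (prolQ (ser_var (Suc 0))) (ser_var (Suc (Suc 0))) ?mon = (-1::'a)"
    by (simp add: Qy_mult m1)
  moreover have "(Phy (Suc 0) ?mon :: 'a) = Dx (Phy 0) ?mon + ser_mult (prolQ (ser_var (Suc 0))) (ser_var (Suc (Suc 0))) ?mon"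
    by (rule Phy_step)
  moreover have "(Dx (Phy 0) ?mon :: 'a) = 0" by (simp add: Dx_zero)
  ultimately show ?thesis by simp
qed

lemma d2: "(Phy 2 (z 2 + z 3) :: 'a::field) = - 3"
  using d_step[of 1, where 'a='a] d1[where 'a='a] by (simp add: numeral_eq_Suc)

lemma d_val: "2 \<le> k \<Longrightarrow> (Phy k (z 2 + z (Suc k)) :: 'a::field) = - of_nat (Suc k)"
proof (induction k rule: dec_induct)
  case base then show ?case using d2 by (simp add: numeral_eq_Suc)
next
  case (step n)
  have "(Phy (Suc n) (z 2 + z (Suc (Suc n))) :: 'a) = Phy n (z 2 + z (Suc n)) + (- 1)"
    using d_step[of n, where 'a='a] step.hyps by simp
  then show ?case using step.IH by simp
qed


lemma sum_sing: "(\<Sum>j\<in>{a}. f j) = (f a :: 'b::comm_monoid_add)" by simp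
lemma sum_two: "a \<noteq> b \<Longrightarrow> (\<Sum>j\<in>{a, b}. f j) = f a + (f b :: 'b::comm_monoid_add)" by simp

lemma c3: "(Phy 3 (z 3 + z 3) :: 'a::field) = - 3"
proof -
  let ?mon = "z 3 + z 3"
  have T: "{j. j \<noteq> 0 \<and> lk ?mon (Suc (Suc j)) \<noteq> 0} = {1}" by auto
  have h1: "z 3 + z 3 - z (Suc (Suc 1)) + z (Suc 1) = z 2 + z 3" by (simp add: pm_eq_iff)
  have h2: "lk (z 3 + z 3 - z (Suc (Suc 1))) (Suc 1) = 0" by simp
  have A: "(Dx (Phy 2) ?mon :: 'a) = Phy 2 (z 2 + z 3)"
    by (simp only: Dx_Phy_val T sum_sing h1 h2) simp
  have B: "ser_mult (prolQ (ser_var (Suc 0))) (ser_var (Suc (Suc 2))) ?mon = (0::'a)"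
    by (simp add: Qy_mult)
  have "(Phy (Suc 2) ?mon :: 'a) = Dx (Phy 2) ?mon + ser_mult (prolQ (ser_var (Suc 0))) (ser_var (Suc (Suc 2))) ?mon"
    by (rule Phy_step)
  then have "(Phy (Suc 2) ?mon :: 'a) = Phy 2 (z 2 + z 3)" by (simp only: A B add_0_right)
  then show ?thesis using d2 by (simp add: numeral_eq_Suc)
qed

lemma c_step: assumes k: "3 \<le> k"
  shows "(Phy (Suc k) (z 3 + z (Suc k)) :: 'a::field) = Phy k (z 2 + z (Suc k)) + (if k = 3 then 2 else 1) * Phy k (z 3 + z k)"
proof -
  let ?mon = "z 3 + z (Suc k)"
  have T: "{j. j \<noteq> 0 \<and> lk ?mon (Suc (Suc j)) \<noteq> 0} = {1, k - 1}" using k by auto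
  have ne: "(1::nat) \<noteq> k - 1" using k by simp
  have h1: "?mon - z (Suc (Suc 1)) + z (Suc 1) = z 2 + z (Suc k)" using k by (simp add: pm_eq_iff)
  have h2: "lk (?mon - z (Suc (Suc 1))) (Suc 1) = 0" using k by simp
  have h3: "?mon - z (Suc (Suc (k - 1))) + z (Suc (k - 1)) = z 3 + z k" using k by (simp add: pm_eq_iff)
  have h4: "(of_nat (lk (?mon - z (Suc (Suc (k - 1)))) (Suc (k - 1)) + 1) :: 'a) = (if k = 3 then 2 else 1)"
    using k by auto
  have A: "(Dx (Phy k) ?mon :: 'a) = Phy k (z 2 + z (Suc k)) + (if k = 3 then 2 else 1) * Phy k (z 3 + z k)"
    by (simp only: Dx_Phy_val T sum_two[OF ne] h1 h2 h3 h4) simp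
  have B: "ser_mult (prolQ (ser_var (Suc 0))) (ser_var (Suc (Suc k))) ?mon = (0::'a)"
    using k by (simp add: Qy_mult)
  have "(Phy (Suc k) ?mon :: 'a) = Dx (Phy k) ?mon + ser_mult (prolQ (ser_var (Suc 0))) (ser_var (Suc (Suc k))) ?mon"
    by (rule Phy_step)
  then show ?thesis by (simp only: A B add_0_right)
qed

lemma c_val: "3 \<le> k \<Longrightarrow> \<exists>n>0. (Phy k (z 3 + z k) :: 'a::field) = - of_nat n"
proof (induction k rule: dec_induct)
  case base then show ?case using c3 by (intro exI[of _ 3]) simp
next
  case (step n)
  then obtain p where p: "p > 0" "(Phy n (z 3 + z n) :: 'a) = - of_nat p" by blast
  have dn: "(Phy n (z 2 + z (Suc n)) :: 'a) = - of_nat (Suc n)" using step.hyps by (intro d_val) simp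
  let ?t = "if n = 3 then 2 else 1::nat"
  have "(Phy (Suc n) (z 3 + z (Suc n)) :: 'a) = - of_nat (Suc n) + of_nat ?t * (- of_nat p)"
    using c_step[of n, where 'a='a] step.hyps dn p(2) by simp
  also have "\<dots> = - of_nat (Suc n + ?t * p)" by simp
  finally show ?case by blast
qed


lemma Wm_ge: assumes "1 \<le> j" "j \<le> Suc m" shows "j * lk b j \<le> Wm m b"
proof -
  have "Suc (j - 1) * lk b (Suc (j - 1)) \<le> (\<Sum>k\<le>m. Suc k * lk b (Suc k))"
    by (rule member_le_sum) (use assms in auto)
  then show ?thesis using assms by (simp add: Wm_def)
qed

lemma W03: assumes "lk b (Suc 0) = 0" "lk b 2 = 0" shows "Wm m b = 0 \<or> 3 \<le> Wm m b"
proof (rule disjCI)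
  assume "\<not> 3 \<le> Wm m b"
  show "Wm m b = 0"
  proof (rule ccontr)
    assume "Wm m b \<noteq> 0"
    then obtain k where k: "k \<le> m" "Suc k * lk b (Suc k) \<noteq> 0" unfolding Wm_def
      by (metis (no_types, lifting) atMost_iff sum.neutral)
    have "k \<noteq> 0" proof assume "k = 0" then show False using assms k(2) by simp qed
    moreover have "k \<noteq> 1" proof assume "k = 1" then show False using assms k(2) by (simp add: numeral_eq_Suc) qed
    ultimately have "k \<noteq> 0" "k \<noteq> 1" by auto
    then have "3 \<le> Suc k * lk b (Suc k)" using k(2) by (cases "lk b (Suc k)") auto
    also have "\<dots> \<le> Wm m b" unfolding Wm_def by (rule member_le_sum) (use k in auto)
    finally show False using \<open>\<not> 3 \<le> Wm m b\<close> by simp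
  qed
qed

lemma yp_contra:
  fixes Q0 :: "'a::field_char_0 ser"
  assumes Q: "Qfree m Q0" and m3: "3 \<le> m"
    and E: "\<And>c. Q0 c \<noteq> 0 \<Longrightarrow> lk c 0 + Suc m = Wm m c"
    and L: "\<exists>B. in_A B \<and> prol (ser_var (Suc 0)) (\<lambda>_. 0) (ser_sub (ser_var (Suc m)) Q0) = ser_mult (ser_sub (ser_var (Suc m)) Q0) B"
  shows False
proof -
  let ?P = "ser_sub (ser_var (Suc m)) Q0"
  let ?mon = "z 3 + z m"
  obtain B where B: "in_A B" and eq: "prol (ser_var (Suc 0)) (\<lambda>_. 0) ?P = ser_mult ?P B" using L by blast
  have lkmon: "lk ?mon j = (if 3 = j then 1 else 0) + (if m = j then 1 else 0)" for j by simp
  have sub: "lk b j \<le> lk ?mon j" "lk a j \<le> lk ?mon j" if "a + b = ?mon" for a b j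
  proof -
    have "lk (a + b) j = lk ?mon j" using that by simp
    then show "lk b j \<le> lk ?mon j" "lk a j \<le> lk ?mon j" by (simp_all only: lk_add)
  qed
  have Wmon: "Wm m ?mon = 3 + m" using m3 by (simp add: Wm_add Wm_z)
  have small: "lk b (Suc 0) = 0" "lk b 2 = 0" "lk b 0 = 0" if "a + b = ?mon" for a b
    using sub(1)[OF that, of "Suc 0"] sub(1)[OF that, of 2] sub(1)[OF that, of 0] m3 by auto
  have R: "ser_mult ?P B ?mon = 0"
  proof -
    have "ser_mult ?P B ?mon = ser_mult (ser_var (Suc m)) B ?mon - ser_mult Q0 B ?mon" by (rule mult_sub_l)
    also have "ser_mult (ser_var (Suc m)) B ?mon = 0" using m3 by (simp add: mult_var_l)
    also have "ser_mult Q0 B ?mon = 0"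
      unfolding ser_mult_def
    proof (rule sum.neutral, rule ballI)
      fix p assume p: "p \<in> {p. fst p + snd p = ?mon}"
      show "Q0 (fst p) * B (snd p) = 0"
      proof (rule ccontr)
        assume "Q0 (fst p) * B (snd p) \<noteq> 0"
        then have q: "Q0 (fst p) \<noteq> 0" by auto
        have ps: "fst p + snd p = ?mon" "snd p + fst p = ?mon" using p by (auto simp: add.commute)
        have "lk (fst p) 0 + Suc m = Wm m (fst p)" by (rule E[OF q])
        moreover have "lk (fst p) 0 = 0" using small(3)[OF ps(2)] .
        moreover have "Wm m (fst p) + Wm m (snd p) = 3 + m" using ps(1) Wmon by (metis Wm_add)
        ultimately have "Wm m (snd p) = 2" by simp
        then show False using W03[OF small(1,2)[OF ps(1)], of m] by simp
      qed
    qed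
    finally show ?thesis by simp
  qed
  have pdm: "ser_pd (Suc m) ?P = ser_const 1"
    by (rule ext) (simp add: pdP_m[OF Q] ser_const_def)
  have zero_terms: "ser_mult (Phy k) (ser_pd (Suc k) ?P) ?mon = (0::'a)" if k: "k < m" for k
    unfolding ser_mult_def
  proof (rule sum.neutral, rule ballI)
    fix p assume p: "p \<in> {p. fst p + snd p = ?mon}"
    show "(Phy k (fst p) :: 'a) * ser_pd (Suc k) ?P (snd p) = 0"
    proof (rule ccontr)
      assume nz: "(Phy k (fst p) :: 'a) * ser_pd (Suc k) ?P (snd p) \<noteq> 0"
      then have phi: "(Phy k (fst p) :: 'a) \<noteq> 0" and pd: "ser_pd (Suc k) ?P (snd p) \<noteq> 0" by auto
      have ps: "fst p + snd p = ?mon" using p by simp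
      have "ser_pd (Suc k) Q0 (snd p) \<noteq> 0" using pd pdP_small[OF k, where ?Q0.0=Q0 and mon="snd p"] by simp
      then have q: "Q0 (snd p + z (Suc k)) \<noteq> 0" by (simp add: pd_val)
      have "lk (snd p + z (Suc k)) 0 + Suc m = Wm m (snd p + z (Suc k))" by (rule E[OF q])
      moreover have "lk (snd p + z (Suc k)) 0 = 0" using small(3)[OF ps] by simp
      moreover have "Wm m (snd p + z (Suc k)) = Wm m (snd p) + Suc k" using k by (simp add: Wm_add Wm_z)
      ultimately have w: "Wm m (snd p) + Suc k = Suc m" by simp
      have k0: "k \<noteq> 0"
      proof
        assume "k = 0" then show False using phi by simp
      qed
      show False
      proof (cases "Suc k < m")
        case True
        have "lk (fst p) m = 0"
        proof (rule ccontr)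
          assume "lk (fst p) m \<noteq> 0"
          then have "(Phy k (fst p) :: 'a) = 0" using True by (intro Phy_avoid_val) auto
          then show False using phi by simp
        qed
        moreover have "lk (fst p) m + lk (snd p) m = lk ?mon m" using ps by (metis lk_add)
        ultimately have "1 \<le> lk (snd p) m" using lkmon[of m] by simp
        moreover have "m * lk (snd p) m \<le> Wm m (snd p)" by (rule Wm_ge) (use m3 in auto)
        ultimately have "m \<le> Wm m (snd p)"
          by (metis le_trans mult.right_neutral mult_le_mono2)
        then show False using w k0 by simp
      next
        case False
        then have "Wm m (snd p) = 1" using w k by simp
        then show False using W03[OF small(1,2)[OF ps], of m] by simp
      qed
    qed
  qed
  have "prol (ser_var (Suc 0)) (\<lambda>_. 0) ?P ?mon =
    ser_mult (ser_var (Suc 0)) (ser_pd 0 ?P) ?mon + (\<Sum>k<Suc m. ser_mult (Phy k) (ser_pd (Suc k) ?P) ?mon)"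
    by (simp only: prol_P[OF Q] lessThan_Suc_atMost)
  also have "ser_mult (ser_var (Suc 0)) (ser_pd 0 ?P) ?mon = (0::'a)" using m3 by (simp add: mult_var_l)
  also have "(\<Sum>k<Suc m. ser_mult (Phy k) (ser_pd (Suc k) ?P) ?mon) =
       (\<Sum>k<m. ser_mult (Phy k) (ser_pd (Suc k) ?P) ?mon) + ser_mult (Phy m) (ser_pd (Suc m) ?P) ?mon"
    by (rule sum.lessThan_Suc)
  also have "(\<Sum>k<m. ser_mult (Phy k) (ser_pd (Suc k) ?P) ?mon) = (0::'a)"
    by (rule sum.neutral) (use zero_terms in auto)
  also have "ser_mult (Phy m) (ser_pd (Suc m) ?P) ?mon = (Phy m ?mon :: 'a)"
    by (simp only: pdm mult_const_r mult_1)
  finally have "(Phy m ?mon :: 'a) = 0" using eq R by simp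
  moreover obtain n where "n > 0" "(Phy m ?mon :: 'a) = - of_nat n" using c_val[OF m3] by blast
  ultimately show False by simp
qed


lemma span_mem: "(ser_add (ser_add (ser_const a) (ser_smult d (ser_var 0))) (ser_smult e (ser_var 1)),
   ser_sub (ser_add (ser_const b) (ser_smult c (ser_var 0))) (ser_smult d (ser_var 1))) \<in> span5"
  unfolding span5_def by blast

lemma Lsym_get: "(f, g) \<in> Lsym P \<Longrightarrow> \<exists>B. in_A B \<and> prol f g P = ser_mult P B"
  unfolding Lsym_def by blast

lemma in_A_const: "in_A (ser_const c)"
proof -
  have "{m. ser_const c m \<noteq> 0} \<subseteq> {0}" by (auto simp: ser_const_def split: if_splits)
  then have "finite {m. ser_const c m \<noteq> 0}" by (rule finite_subset) simp
  then show ?thesis unfolding in_A_def by simp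
qed

lemma m2_Q0_zero:
  fixes Q0 :: "'a::field_char_0 ser"
  assumes Q: "Qfree 2 Q0"
    and E: "\<And>c. Q0 c \<noteq> 0 \<Longrightarrow> lk c 0 + Suc 2 = Wm 2 c"
    and Lp: "\<exists>B. in_A B \<and> prol (ser_const 1) (\<lambda>_. 0) (ser_sub (ser_var (Suc 2)) Q0) = ser_mult (ser_sub (ser_var (Suc 2)) Q0) B"
    and Lq: "\<exists>B. in_A B \<and> prol (\<lambda>_. 0) (ser_const 1) (ser_sub (ser_var (Suc 2)) Q0) = ser_mult (ser_sub (ser_var (Suc 2)) Q0) B"
  shows "Q0 c = 0"
proof (rule ccontr)
  let ?P = "ser_sub (ser_var (Suc 2)) Q0"
  assume c: "Q0 c \<noteq> 0"
  obtain B1 where B1: "in_A B1" "prol (ser_const 1) (\<lambda>_. 0) ?P = ser_mult ?P B1" using Lp by blast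
  obtain B2 where B2: "in_A B2" "prol (\<lambda>_. 0) (ser_const 1) ?P = ser_mult ?P B2" using Lq by blast
  have p1: "prol (ser_const 1) (\<lambda>_. 0) ?P mon = ser_pd 0 ?P mon" for mon
    by (subst prol_P[OF Q]) (simp add: Phi_p mult_const_l mult_zero_l)
  have l0: "lk c 0 = 0"
  proof (rule pdinv[OF Q _ _ B1(1) _ c])
    fix mon show "ser_pd 0 ?P mon = ser_mult ?P B1 mon" using p1[of mon] B1(2) by simp
  qed auto
  have q1: "prol (\<lambda>_. 0) (ser_const 1) ?P mon = ser_pd (Suc 0) ?P mon" for mon
  proof -
    have "prol (\<lambda>_. 0) (ser_const 1) ?P mon = ser_mult (\<lambda>_. 0) (ser_pd 0 ?P) mon +
      (\<Sum>k\<le>2. ser_mult (prolPhi (\<lambda>_. 0) (ser_const 1) k) (ser_pd (Suc k) ?P) mon)"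
      by (rule prol_P[OF Q])
    also have "\<dots> = (\<Sum>k\<le>(2::nat). if k = 0 then ser_pd (Suc 0) ?P mon else 0)"
      by (simp only: mult_zero_l add_0_left, rule sum.cong) (auto simp: Phi_q mult_const_l mult_zero_l)
    also have "\<dots> = ser_pd (Suc 0) ?P mon" by (subst sum_if_eq) auto
    finally show ?thesis .
  qed
  have l1: "lk c (Suc 0) = 0"
  proof (rule pdinv[OF Q _ _ B2(1) _ c])
    fix mon show "ser_pd (Suc 0) ?P mon = ser_mult ?P B2 mon" using q1[of mon] B2(2) by simp
  qed auto
  have l3: "lk c 3 = 0" using Q c unfolding Qfree_def by (auto simp: numeral_eq_Suc)
  have "Wm 2 c = lk c 1 + 2 * lk c 2 + 3 * lk c 3" by (simp add: Wm_def numeral_eq_Suc atMost_Suc)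
  then have "3 = 2 * lk c 2" using E[OF c] l0 l1 l3 by simp
  then show False by presburger
qed

lemma m2_extra:
  fixes Q0 :: "'a::field_char_0 ser"
  assumes Q0: "\<And>c. Q0 c = 0"
  shows "(ser_var 0, ser_zero) \<in> Lsym (ser_sub (ser_var (Suc 2)) Q0)"
proof -
  let ?P = "ser_sub (ser_var (Suc 2)) Q0"
  have Q: "Qfree 2 Q0" using Q0 by (simp add: Qfree_def)
  have Kx: "in_Kxy (ser_var 0 :: 'a ser)" by (auto simp: in_Kxy_def var_val)
  have Kz: "in_Kxy (ser_zero :: 'a ser)" by (auto simp: in_Kxy_def ser_zero_def)
  have "prol (ser_var 0) ser_zero ?P mon = ser_mult ?P (ser_const (-2)) mon" for mon
  proof -
    have "prol (ser_var 0) ser_zero ?P mon = of_nat (lk mon 0) * ?P mon +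
        (\<Sum>k\<le>2. (- of_nat k) * (of_nat (lk mon (Suc k)) * ?P mon))"
      by (subst prol_P[OF Q]) (simp add: ser_zero_def Phi_X mult_smult_l EU)
    also have "\<dots> = -2 * ?P mon"
    proof (cases "mon = z 3")
      case True then show ?thesis by (simp add: numeral_eq_Suc atMost_Suc P_val)
    next
      case False then have "?P mon = 0" by (simp add: P_val Q0 numeral_eq_Suc)
      then show ?thesis by simp
    qed
    finally show ?thesis by (simp add: mult_const_r)
  qed
  then have "prol (ser_var 0) ser_zero ?P = ser_mult ?P (ser_const (-2))" by (rule ext)
  then show ?thesis unfolding Lsym_def using Kx Kz in_A_const by blast
qed

lemma not_span: "(ser_var 0, ser_zero) \<notin> (span5 :: ('a::field ser \<times> 'a ser) set)"
proof
  assume "(ser_var 0, ser_zero) \<in> (span5 :: ('a ser \<times> 'a ser) set)"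
  then obtain a b c d e :: 'a where
    f: "ser_var 0 = ser_add (ser_add (ser_const a) (ser_smult d (ser_var 0))) (ser_smult e (ser_var 1))" and
    g: "ser_zero = ser_sub (ser_add (ser_const b) (ser_smult c (ser_var 0))) (ser_smult d (ser_var 1))"
    unfolding span5_def by blast
  have n0: "z 0 \<noteq> 0" "z 0 \<noteq> z 1" "z 1 \<noteq> 0" "z 1 \<noteq> z 0" by (auto simp: pm_eq_iff)
  have "ser_var 0 (z 0) = ser_add (ser_add (ser_const a) (ser_smult d (ser_var 0))) (ser_smult e (ser_var 1)) (z 0)"
    using f by simp
  then have d1: "d = 1" using n0 by (simp add: ser_add_def ser_smult_def ser_const_def var_val)
  have "ser_zero (z 1) = ser_sub (ser_add (ser_const b) (ser_smult c (ser_var 0))) (ser_smult d (ser_var 1)) (z 1)"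
    using g by simp
  then have "d = 0" using n0 by (simp add: ser_add_def ser_sub_def ser_zero_def ser_smult_def ser_const_def var_val)
  then show False using d1 by simp
qed


theorem mainTheorem10:
  shows "\<not> (\<exists>(m::nat) (Q0 :: 'a::field_char_0 ser).
            2 \<le> m \<and> in_A Q0 \<and>
            (\<forall>mon. Q0 mon \<noteq> 0 \<longrightarrow> (\<forall>i\<ge>m. Poly_Mapping.lookup mon (Suc i) = 0)) \<and>
            Lsym (ser_sub (ser_var (Suc m)) Q0) = span5)"
proof
  assume "\<exists>(m::nat) (Q0 :: 'a::field_char_0 ser).
            2 \<le> m \<and> in_A Q0 \<and>
            (\<forall>mon. Q0 mon \<noteq> 0 \<longrightarrow> (\<forall>i\<ge>m. Poly_Mapping.lookup mon (Suc i) = 0)) \<and>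
            Lsym (ser_sub (ser_var (Suc m)) Q0) = span5"
  then obtain m and Q0 :: "'a ser" where m2: "2 \<le> m"
    and fr: "\<forall>mon. Q0 mon \<noteq> 0 \<longrightarrow> (\<forall>i\<ge>m. Poly_Mapping.lookup mon (Suc i) = 0)"
    and LS: "Lsym (ser_sub (ser_var (Suc m)) Q0) = span5" by blast
  let ?P = "ser_sub (ser_var (Suc m)) Q0"
  have Q: "Qfree m Q0" using fr by (simp add: Qfree_def)
  have get: "\<exists>B. in_A B \<and> prol (ser_add (ser_add (ser_const a) (ser_smult d (ser_var 0))) (ser_smult e (ser_var 1)))
      (ser_sub (ser_add (ser_const b) (ser_smult c (ser_var 0))) (ser_smult d (ser_var 1))) ?P = ser_mult ?P B" for a b c d e
    using span_mem[of a d e b c] LS by (intro Lsym_get) simp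
  have fE: "ser_add (ser_add (ser_const 0) (ser_smult 1 (ser_var 0))) (ser_smult 0 (ser_var 1)) = (ser_var 0 :: 'a ser)"
    by (rule ext) (simp add: ser_add_def ser_smult_def ser_const_def var_val)
  have gE: "ser_sub (ser_add (ser_const 0) (ser_smult 0 (ser_var 0))) (ser_smult 1 (ser_var 1)) = (ser_smult (-1) (ser_var (Suc 0)) :: 'a ser)"
    by (rule ext) (simp add: ser_add_def ser_sub_def ser_smult_def ser_const_def)
  have LE: "\<exists>B. in_A B \<and> prol (ser_var 0) (ser_smult (-1) (ser_var (Suc 0))) ?P = ser_mult ?P B"
    using get[of 0 1 0 0 0] by (simp only: fE gE)
  have E: "lk c 0 + Suc m = Wm m c" if "Q0 c \<noteq> 0" for c
    by (rule euler[OF Q _ LE that]) (use m2 in simp)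
  show False
  proof (cases "3 \<le> m")
    case True
    have fy: "ser_add (ser_add (ser_const 0) (ser_smult 0 (ser_var 0))) (ser_smult 1 (ser_var 1)) = (ser_var (Suc 0) :: 'a ser)"
      by (rule ext) (simp add: ser_add_def ser_smult_def ser_const_def var_val)
    have gy: "ser_sub (ser_add (ser_const 0) (ser_smult 0 (ser_var 0))) (ser_smult 0 (ser_var 1)) = (\<lambda>_. 0 :: 'a)"
      by (rule ext) (simp add: ser_add_def ser_sub_def ser_smult_def ser_const_def)
    have LY: "\<exists>B. in_A B \<and> prol (ser_var (Suc 0)) (\<lambda>_. 0) ?P = ser_mult ?P B"
      using get[of 0 0 1 0 0] by (simp only: fy gy)
    show False by (rule yp_contra[OF Q True E LY])
  next
    case False
    then have m: "m = 2" using m2 by simp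
    have fp: "ser_add (ser_add (ser_const 1) (ser_smult 0 (ser_var 0))) (ser_smult 0 (ser_var 1)) = (ser_const 1 :: 'a ser)"
      by (rule ext) (simp add: ser_add_def ser_smult_def ser_const_def)
    have gp: "ser_sub (ser_add (ser_const 0) (ser_smult 0 (ser_var 0))) (ser_smult 0 (ser_var 1)) = (\<lambda>_. 0 :: 'a)"
      by (rule ext) (simp add: ser_add_def ser_sub_def ser_smult_def ser_const_def)
    have fq: "ser_add (ser_add (ser_const 0) (ser_smult 0 (ser_var 0))) (ser_smult 0 (ser_var 1)) = (\<lambda>_. 0 :: 'a)"
      by (rule ext) (simp add: ser_add_def ser_smult_def ser_const_def)
    have gq: "ser_sub (ser_add (ser_const 1) (ser_smult 0 (ser_var 0))) (ser_smult 0 (ser_var 1)) = (ser_const 1 :: 'a ser)"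
      by (rule ext) (simp add: ser_add_def ser_sub_def ser_smult_def ser_const_def)
    have Lp: "\<exists>B. in_A B \<and> prol (ser_const 1) (\<lambda>_. 0) ?P = ser_mult ?P B"
      using get[of 1 0 0 0 0] by (simp only: fp gp)
    have Lq: "\<exists>B. in_A B \<and> prol (\<lambda>_. 0) (ser_const 1) ?P = ser_mult ?P B"
      using get[of 0 0 0 1 0] by (simp only: fq gq)
    have Q0z: "Q0 c = 0" for c
      using m2_Q0_zero[of Q0] Q E Lp Lq unfolding m by blast
    have "(ser_var 0, ser_zero) \<in> Lsym ?P" unfolding m by (rule m2_extra[OF Q0z])
    then have "(ser_var 0, ser_zero) \<in> (span5 :: ('a ser \<times> 'a ser) set)" using LS by simp
    then show False using not_span by blast
  qed
qed


end
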